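(* Let $p,q$ be nonzero elements of $D$. Then the matrix $\begin{pmatrix} p & q\\ 0 & 0\end{pmatrix}$ is a product of idempotent $2\times 2$ matrices over $D$ if one of the following holds: (i) $\deg p\ge\deg q$, and either $q(u)>0$ for every real root $u$ of $p$, or $q(u)<0$ for every real root $u$ of $p$; (ii) $\deg q\ge\deg p$, and either $p(z)>0$ for every real root $z$ of $q$, or $p(z)<0$ for every real root $z$ of $q$.
   Context: $D$ denotes the minimal Dress ring of the field $\mathbb{R}(X)$, i.e. the subring of $\mathbb{R}(X)$ generated by $\mathbb{Z}$ and all elements $1/(1+h^2)$ with $h\in\mathbb{R}(X)$; its elements are the rational functions $f/\gamma$ with $f,\gamma\in\mathbb{R}[X]$, $\gamma$ without real roots and $\deg f\le\deg\gamma$. For a rational function $f/g$ ($f,g\in\mathbb{R}[X]$) its degree is $\deg(f/g)=\deg f-\deg g$, and its real roots are the real numbers where it vanishes (for elements of $D$, the real roots of the numerator in reduced form). A matrix $E$ is idempotent if $E^2=E$. *)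

theory Defs
  imports "HOL-Analysis.Analysis" "HOL-Computational_Algebra.Polynomial"
    "HOL-Computational_Algebra.Fraction_Field" "HOL-Computational_Algebra.Normalized_Fraction"
    "HOL-Computational_Algebra.Polynomial_Factorial" "HOL-Computational_Algebra.Field_as_Ring"
begin

text \<open>The field R(X) is rendered as \<open>real poly fract\<close>.
  The minimal Dress ring D: rational functions f/g with g without real roots and deg f \<le> deg g.\<close>
definition dressD :: "real poly fract set" where
  "dressD = {x. \<exists>f g. g \<noteq> 0 \<and> (\<forall>u::real. poly g u \<noteq> 0) \<and> degree f \<le> degree g \<and> x = Fract f g}"

text \<open>Numerator and denominator of the reduced form.\<close>
definition rnum :: "real poly fract \<Rightarrow> real poly" where
  "rnum x = fst (quot_of_fract x)"
definition rden :: "real poly fract \<Rightarrow> real poly" where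
  "rden x = snd (quot_of_fract x)"

text \<open>Degree of a rational function f/g: deg f - deg g.\<close>
definition rdeg :: "real poly fract \<Rightarrow> int" where
  "rdeg x = int (degree (rnum x)) - int (degree (rden x))"

text \<open>Value of a rational function at a real point.\<close>
definition reval :: "real poly fract \<Rightarrow> real \<Rightarrow> real" where
  "reval x u = poly (rnum x) u / poly (rden x) u"

text \<open>Real roots: real zeros of the numerator in reduced form.\<close>
definition rroots :: "real poly fract \<Rightarrow> real set" where
  "rroots x = {u. poly (rnum x) u = 0}"

definition idempotent_mat :: "'a::semiring_1 ^'n::finite^'n \<Rightarrow> bool" where
  "idempotent_mat E \<longleftrightarrow> E ** E = E"

text \<open>A 2x2 matrix over D is a (finite) product of idempotent 2x2 matrices over D.\<close>
definition prod_idempotents_D :: "real poly fract ^2^2 \<Rightarrow> bool" where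
  "prod_idempotents_D M \<longleftrightarrow> (\<exists>Es. (\<forall>E\<in>set Es. (\<forall>i j. E $ i $ j \<in> dressD) \<and> idempotent_mat E)
      \<and> M = foldr (**) Es (mat 1))"

definition row_mat :: "'a::zero \<Rightarrow> 'a \<Rightarrow> 'a ^2^2" where
  "row_mat p q = (\<chi> i j. if i = 1 then (if j = 1 then p else q) else 0)"

end

theory Submission
  imports Defs "HOL-Computational_Algebra.Fundamental_Theorem_Algebra"
begin


lemma D_Fract: "g \<noteq> 0 \<Longrightarrow> (\<forall>u. poly g u \<noteq> 0) \<Longrightarrow> degree f \<le> degree g \<Longrightarrow> Fract f g \<in> dressD"
  unfolding dressD_def by blast

lemma D_E: assumes "x \<in> dressD"
  obtains f g where "g \<noteq> 0" "\<forall>u. poly g u \<noteq> 0" "degree f \<le> degree g" "x = Fract f g"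
  using assms unfolding dressD_def by blast

lemma nr_mult: "(\<forall>u. poly g u \<noteq> (0::real)) \<Longrightarrow> (\<forall>u. poly g' u \<noteq> 0) \<Longrightarrow> (\<forall>u. poly (g*g') u \<noteq> 0)"
  by simp

lemma D_add: assumes "x \<in> dressD" "y \<in> dressD" shows "x + y \<in> dressD"
proof -
  obtain f g where fg: "g \<noteq> 0" "\<forall>u. poly g u \<noteq> 0" "degree f \<le> degree g" "x = Fract f g"
    using assms(1) by (rule D_E)
  obtain f' g' where fg': "g' \<noteq> 0" "\<forall>u. poly g' u \<noteq> 0" "degree f' \<le> degree g'" "y = Fract f' g'"
    using assms(2) by (rule D_E)
  have e: "x + y = Fract (f * g' + f' * g) (g * g')" using fg fg' by simp
  have d: "degree (g * g') = degree g + degree g'" using fg fg' by (simp add: degree_mult_eq)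
  have "degree (f * g') \<le> degree g + degree g'" using degree_mult_le[of f g'] fg by linarith
  moreover have "degree (f' * g) \<le> degree g + degree g'" using degree_mult_le[of f' g] fg' by linarith
  ultimately have "degree (f * g' + f' * g) \<le> degree (g * g')"
    using d degree_add_le by metis
  then show ?thesis unfolding e by (intro D_Fract) (use fg fg' in auto)
qed

lemma D_mult: assumes "x \<in> dressD" "y \<in> dressD" shows "x * y \<in> dressD"
proof -
  obtain f g where fg: "g \<noteq> 0" "\<forall>u. poly g u \<noteq> 0" "degree f \<le> degree g" "x = Fract f g"
    using assms(1) by (rule D_E)
  obtain f' g' where fg': "g' \<noteq> 0" "\<forall>u. poly g' u \<noteq> 0" "degree f' \<le> degree g'" "y = Fract f' g'"
    using assms(2) by (rule D_E)
  have e: "x * y = Fract (f * f') (g * g')" using fg fg' by simp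
  have d: "degree (g * g') = degree g + degree g'" using fg fg' by (simp add: degree_mult_eq)
  have "degree (f * f') \<le> degree (g * g')" using degree_mult_le[of f f'] fg fg' d by linarith
  then show ?thesis unfolding e by (intro D_Fract) (use fg fg' in auto)
qed

lemma D_uminus: assumes "x \<in> dressD" shows "- x \<in> dressD"
proof -
  obtain f g where fg: "g \<noteq> 0" "\<forall>u. poly g u \<noteq> 0" "degree f \<le> degree g" "x = Fract f g"
    using assms(1) by (rule D_E)
  have e: "- x = Fract (- f) g" using fg by simp
  show ?thesis unfolding e by (intro D_Fract) (use fg in auto)
qed

lemma D_one: "1 \<in> dressD"
  using D_Fract[of 1 1] by (simp add: One_fract_def)

lemma D_zero: "0 \<in> dressD"
  using D_Fract[of 1 0] by (simp add: Zero_fract_def)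

lemma D_diff: "x \<in> dressD \<Longrightarrow> y \<in> dressD \<Longrightarrow> x - y \<in> dressD"
  using D_add[of x "-y"] D_uminus[of y] by simp



lemma idem_D_intro: "(\<forall>i j. E $ i $ j \<in> dressD) \<Longrightarrow> E ** E = E \<Longrightarrow> (\<forall>i j. E $ i $ j \<in> dressD) \<and> idempotent_mat E"
  by (simp add: idempotent_mat_def)

lemma all2: "(\<forall>i::2. P i) \<longleftrightarrow> P 1 \<and> P 2" by (metis exhaust_2)

lemma case_i_mat:
  fixes p q e :: "real poly fract"
  assumes "p \<noteq> 0" "e \<noteq> 0" "p \<in> dressD" "q \<in> dressD" "e \<in> dressD" "1/e \<in> dressD"
    "q * (1 - q*e) / p \<in> dressD"
  shows "prod_idempotents_D (row_mat p q)"
proof -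
  define v1 where "v1 = (1 - q*e)/p"
  define E1 :: "real poly fract^2^2" where "E1 = (\<chi> i j. if i = 1 then (if j = 1 then 1 else 1/e) else 0)"
  define E2 :: "real poly fract^2^2" where "E2 = (\<chi> i j. if i = 2 \<and> j = 2 then 1 else 0)"
  define E3 :: "real poly fract^2^2" where "E3 = (\<chi> i j. (if i = 1 then v1 else e) * (if j = 1 then p else q))"
  have ne: "(1::2) \<noteq> 2" by simp
  have v1p: "v1 * p = 1 - q*e" using assms(1) by (simp add: v1_def)
  have v1q: "v1 * q = q * (1 - q*e) / p" by (simp add: v1_def)
  have m0: "1 - q*e \<in> dressD" using D_diff[OF D_one D_mult[OF assms(4,5)]] .
  have m1: "p * v1 \<in> dressD" using v1p D_diff[OF D_one D_mult[OF assms(4,5)]] by (simp add: mult.commute)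
  have m2: "q * v1 \<in> dressD" using v1q assms(7) by (simp add: mult.commute)
  have mem1: "\<forall>E\<in>set [E1,E2,E3]. (\<forall>i j. E $ i $ j \<in> dressD) \<and> idempotent_mat E"
  proof (intro ballI idem_D_intro)
    fix E assume "E \<in> set [E1,E2,E3]"
    then consider "E = E1" | "E = E2" | "E = E3" by auto
    then show "\<forall>i j. E $ i $ j \<in> dressD"
      by cases (auto simp: E1_def E2_def E3_def all2 ne D_one D_zero assms D_mult v1p v1q
                  m0 m1 m2)
    show "E ** E = E" using \<open>E \<in> _\<close>
      by (auto simp: E1_def E2_def E3_def matrix_matrix_mult_def vec_eq_iff all2 sum_2 ne
          v1p v1q) (auto simp: v1_def field_simps assms)
  qed
  have "row_mat p q = foldr (**) [E1,E2,E3] (mat 1)"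
    using assms(1,2) by (auto simp: E1_def E2_def E3_def matrix_matrix_mult_def vec_eq_iff all2 sum_2 ne
          row_mat_def mat_def)
  then show ?thesis using mem1 unfolding prod_idempotents_D_def by blast
qed



lemma case_ii_mat:
  fixes p q e :: "real poly fract"
  assumes "q \<noteq> 0" "e \<noteq> 0" "p \<in> dressD" "q \<in> dressD" "e \<in> dressD" "1/e \<in> dressD"
    "p * (1 - p*e) / q \<in> dressD"
  shows "prod_idempotents_D (row_mat p q)"
proof -
  define v2 where "v2 = (1 - p*e)/q"
  define E1 :: "real poly fract^2^2" where "E1 = (\<chi> i j. if i = 1 then 1 else 0)"
  define E2 :: "real poly fract^2^2" where "E2 = (\<chi> i j. if i = 2 then (if j = 1 then 1/e else 1) else 0)"
  define E3 :: "real poly fract^2^2" where "E3 = (\<chi> i j. if i = 1 \<and> j = 1 then 1 else 0)"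
  define E4 :: "real poly fract^2^2" where "E4 = (\<chi> i j. (if i = 1 then e else v2) * (if j = 1 then p else q))"
  have ne: "(1::2) \<noteq> 2" by simp
  have v2q: "v2 * q = 1 - p*e" using assms(1) by (simp add: v2_def)
  have v2p: "v2 * p = p * (1 - p*e) / q" by (simp add: v2_def)
  have m0: "1 - p*e \<in> dressD" using D_diff[OF D_one D_mult[OF assms(3,5)]] .
  have m1: "v2 * q \<in> dressD" using v2q m0 by simp
  have m2: "v2 * p \<in> dressD" using v2p assms(7) by simp
  have mem1: "\<forall>E\<in>set [E1,E2,E3,E4]. (\<forall>i j. E $ i $ j \<in> dressD) \<and> idempotent_mat E"
  proof (intro ballI idem_D_intro)
    fix E assume "E \<in> set [E1,E2,E3,E4]"
    then consider "E = E1" | "E = E2" | "E = E3" | "E = E4" by auto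
    then show "\<forall>i j. E $ i $ j \<in> dressD"
      by cases (auto simp: E1_def E2_def E3_def E4_def all2 ne D_one D_zero assms D_mult m0 m1 m2)
    show "E ** E = E" using \<open>E \<in> _\<close>
      by (auto simp: E1_def E2_def E3_def E4_def matrix_matrix_mult_def vec_eq_iff all2 sum_2 ne
          v2p v2q) (auto simp: v2_def field_simps assms)
  qed
  have "row_mat p q = foldr (**) [E1,E2,E3,E4] (mat 1)"
    using assms(1,2) by (auto simp: E1_def E2_def E3_def E4_def matrix_matrix_mult_def vec_eq_iff all2 sum_2 ne
          row_mat_def mat_def)
  then show ?thesis using mem1 unfolding prod_idempotents_D_def by blast
qed



lemma poly_bound_sq:
  fixes L :: "real poly"
  assumes "degree L \<le> m"
  shows "\<bar>poly L x\<bar> \<le> (\<Sum>i\<le>degree L. \<bar>coeff L i\<bar>) * (1 + x^2)^m"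
proof -
  have ax: "\<bar>x\<bar> \<le> 1 + x^2" proof (cases "\<bar>x\<bar> \<le> 1")
    case True then show ?thesis by (simp add: add_increasing2)
  next
    case False then have "\<bar>x\<bar> * 1 \<le> \<bar>x\<bar> * \<bar>x\<bar>" by (intro mult_left_mono) auto
    also have "\<dots> = x^2" by (simp add: power2_eq_square)
    finally show ?thesis by simp
  qed
  have pw: "\<bar>x\<bar>^i \<le> (1 + x^2)^m" if "i \<le> m" for i
  proof -
    have "\<bar>x\<bar>^i \<le> (1+x^2)^i" by (rule power_mono[OF ax]) simp
    also have "\<dots> \<le> (1+x^2)^m" by (rule power_increasing[OF that]) simp
    finally show ?thesis .
  qed
  have "\<bar>poly L x\<bar> = \<bar>\<Sum>i\<le>degree L. coeff L i * x^i\<bar>" by (simp add: poly_altdef)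
  also have "\<dots> \<le> (\<Sum>i\<le>degree L. \<bar>coeff L i * x^i\<bar>)" by (rule sum_abs)
  also have "\<dots> \<le> (\<Sum>i\<le>degree L. \<bar>coeff L i\<bar> * (1 + x^2)^m)"
    using pw assms by (intro sum_mono) (auto simp: abs_mult power_abs intro!: mult_left_mono)
  also have "\<dots> = (\<Sum>i\<le>degree L. \<bar>coeff L i\<bar>) * (1 + x^2)^m" by (simp add: sum_distrib_right)
  finally show ?thesis .
qed

lemma poly_lower_bound:
  fixes F L :: "real poly"
  assumes "F \<noteq> 0" "\<forall>u. poly F u = 0 \<longrightarrow> poly L u > 0"
  shows "\<exists>\<delta>>0. \<forall>x. poly L x \<le> 0 \<longrightarrow> \<delta> \<le> (poly F x)^2"
proof (cases "degree F = 0")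
  case True
  then obtain c where c: "F = [:c:]" by (metis degree_eq_zeroE)
  with assms have "c \<noteq> 0" by auto
  then show ?thesis using c by (intro exI[of _ "c^2"]) auto
next
  case False
  then obtain a p where ap: "F = pCons a p" "p \<noteq> 0" by (metis degree_pCons_0 pCons_cases)
  obtain r where r: "\<forall>z. r \<le> norm z \<longrightarrow> 1 \<le> norm (poly (pCons a p) z)"
    using poly_infinity[OF ap(2), of 1 a] by blast
  define T where "T = {-r..r} \<inter> {x. poly L x \<le> 0}"
  have cT: "compact T" unfolding T_def
    by (intro compact_Int_closed compact_Icc closed_Collect_le) (auto intro: continuous_intros)
  show ?thesis
  proof (cases "T = {}")
    case True
    show ?thesis
    proof (intro exI[of _ 1] conjI allI impI)
      fix x assume "poly L x \<le> 0"
      with True have "x \<notin> {-r..r}" unfolding T_def by blast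
      then have "\<not> \<bar>x\<bar> \<le> r" by (auto simp: abs_le_iff)
      then have "1 \<le> \<bar>poly F x\<bar>" using r ap by auto
      then show "1 \<le> (poly F x)^2" using one_le_power[of "\<bar>poly F x\<bar>" 2] by (simp add: power2_abs)
    qed simp
  next
    case False
    obtain x0 where x0: "x0 \<in> T" "\<forall>y\<in>T. (poly F x0)^2 \<le> (poly F y)^2"
    proof -
      have "continuous_on T (\<lambda>x. (poly F x)^2)" by (intro continuous_intros)
      then show ?thesis using continuous_attains_inf[OF cT False, of "\<lambda>x. (poly F x)^2"] that by blast
    qed
    have "poly F x0 \<noteq> 0" using x0(1) assms(2) unfolding T_def by force
    then have pos: "(poly F x0)^2 > 0" by simp
    show ?thesis
    proof (intro exI[of _ "min 1 ((poly F x0)^2)"] conjI allI impI)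
      fix x assume L: "poly L x \<le> 0"
      show "min 1 ((poly F x0)^2) \<le> (poly F x)^2"
      proof (cases "\<bar>x\<bar> \<le> r")
        case True
        then have "x \<in> T" using L unfolding T_def by auto
        then show ?thesis using x0 by force
      next
        case False
        then have "1 \<le> \<bar>poly F x\<bar>" using r ap by auto
        then have "1 \<le> (poly F x)^2" using one_le_power[of "\<bar>poly F x\<bar>" 2] by (simp add: power2_abs)
        then show ?thesis by linarith
      qed
    qed (use pos in simp)
  qed
qed

lemma pos_lemma:
  fixes F L :: "real poly"
  assumes "F \<noteq> 0" "\<forall>u. poly F u = 0 \<longrightarrow> poly L u > 0" "degree L \<le> m"
  shows "\<exists>c>0. \<forall>x. poly L x + c * (poly F x)^2 * (1 + x^2)^m > 0"
proof -
  define K where "K = (\<Sum>i\<le>degree L. \<bar>coeff L i\<bar>)"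
  have K0: "K \<ge> 0" unfolding K_def by (intro sum_nonneg) auto
  obtain \<delta> where d: "\<delta> > 0" "\<forall>x. poly L x \<le> 0 \<longrightarrow> \<delta> \<le> (poly F x)^2"
    using poly_lower_bound[OF assms(1,2)] by blast
  show ?thesis
  proof (intro exI[of _ "K/\<delta> + 1"] conjI allI)
    have "K/\<delta> \<ge> 0" using K0 d(1) by simp
    then show "K/\<delta> + 1 > 0" by linarith
    fix x
    have "(1::real) + x^2 > 0" by (simp add: add_pos_nonneg)
    then have W: "(1 + x^2)^m > 0" by simp
    show "poly L x + (K/\<delta> + 1) * (poly F x)^2 * (1 + x^2)^m > 0"
    proof (cases "poly L x > 0")
      case True
      have "(K/\<delta> + 1) * (poly F x)^2 * (1 + x^2)^m \<ge> 0" using K0 d W by simp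
      then show ?thesis using True by linarith
    next
      case False
      then have Fd: "\<delta> \<le> (poly F x)^2" using d by auto
      have b: "\<bar>poly L x\<bar> \<le> K * (1 + x^2)^m" using poly_bound_sq[OF assms(3)] K_def by simp
      have "K * (1 + x^2)^m = (K/\<delta>) * \<delta> * (1 + x^2)^m" using d by simp
      also have "\<dots> \<le> (K/\<delta>) * (poly F x)^2 * (1 + x^2)^m"
        using Fd K0 d W by (intro mult_right_mono mult_left_mono) auto
      also have "\<dots> < (K/\<delta> + 1) * (poly F x)^2 * (1 + x^2)^m"
        using Fd d W by (intro mult_strict_right_mono) auto
      finally show ?thesis using b by linarith
    qed
  qed
qed



lemma split_lemma:
  fixes f :: "real poly"
  assumes "f \<noteq> 0"
  shows "\<exists>fr fc. f = fr * fc \<and> fr \<noteq> 0 \<and> (\<forall>x. poly fc x \<noteq> 0) \<and> (\<forall>x. poly fr x = 0 \<longrightarrow> poly f x = 0)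
     \<and> (\<forall>h k. (\<forall>u. poly f u = 0 \<longrightarrow> poly h u \<noteq> 0) \<longrightarrow> (\<exists>L. fr dvd k - h * L))"
  using assms
proof (induction "degree f" arbitrary: f rule: less_induct)
  case less
  show ?case
  proof (cases "\<exists>u. poly f u = 0")
    case False
    show ?thesis by (rule exI[of _ 1], rule exI[of _ f]) (use False in auto)
  next
    case True
    then obtain u where u: "poly f u = 0" by blast
    then obtain f' where f': "f = [:-u,1:] * f'" using poly_eq_0_iff_dvd by (metis dvdE)
    have f'0: "f' \<noteq> 0" using less.prems f' by auto
    have "degree f = degree [:-u,1::real:] + degree f'" unfolding f' using f'0 by (intro degree_mult_eq) auto
    then have "degree f' < degree f" by simp
    from less.hyps[OF this f'0] obtain fr fc where IH: "f' = fr * fc" "fr \<noteq> 0" "\<forall>x. poly fc x \<noteq> 0"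
      "\<forall>x. poly fr x = 0 \<longrightarrow> poly f' x = 0"
      "\<forall>h k. (\<forall>u. poly f' u = 0 \<longrightarrow> poly h u \<noteq> 0) \<longrightarrow> (\<exists>L. fr dvd k - h * L)" by blast
    have A1: "f = [:-u,1:] * fr * fc" by (simp only: f' IH(1) mult.assoc)
    have "[:-u,1::real:] \<noteq> 0" by simp
    then have A2: "[:-u,1:] * fr \<noteq> 0" using IH(2) by (simp only: mult_eq_0_iff) simp
    have A3: "poly f x = 0" if "poly ([:-u,1:] * fr) x = 0" for x using that IH f' by auto
    have A4: "\<exists>L. [:-u,1:] * fr dvd k - h * L" if h: "\<forall>u. poly f u = 0 \<longrightarrow> poly h u \<noteq> 0" for h k
    proof -
      have "\<forall>u. poly f' u = 0 \<longrightarrow> poly h u \<noteq> 0" using h f' by auto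
      then obtain L' Z where Z: "k - h * L' = fr * Z" using IH(5) by (meson dvdE)
      have hu: "poly h u \<noteq> 0" using h u by blast
      define M where "M = [: poly Z u / poly h u :]"
      have "poly (Z - h * M) u = 0" using hu by (simp add: M_def)
      then obtain W where W: "Z - h * M = [:-u,1:] * W" using poly_eq_0_iff_dvd by (metis dvdE)
      have "k - h * (L' + fr * M) = fr * (Z - h * M)"
        using Z by (simp add: algebra_simps)
      also have "\<dots> = [:-u,1:] * fr * W" by (simp only: W mult.assoc mult.commute[of fr])
      finally show ?thesis by (intro exI[of _ "L' + fr * M"]) simp
    qed
    show ?thesis using A1 A2 A3 A4 IH(3) by blast
  qed
qed



lemma D_red:
  assumes "x \<in> dressD"
  shows "rden x \<noteq> 0" "\<forall>u. poly (rden x) u \<noteq> 0" "degree (rnum x) \<le> degree (rden x)"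
    "x = Fract (rnum x) (rden x)"
proof -
  obtain F G where FG: "G \<noteq> 0" "\<forall>u. poly G u \<noteq> 0" "degree F \<le> degree G" "x = Fract F G"
    using assms by (rule D_E)
  show x: "x = Fract (rnum x) (rden x)" unfolding rnum_def rden_def by simp
  show b0: "rden x \<noteq> 0" unfolding rden_def by simp
  have eq: "rnum x * G = F * rden x" using x FG b0 by (metis eq_fract(1))
  have cop: "coprime (rden x) (rnum x)" unfolding rnum_def rden_def
    using coprime_quot_of_fract by (simp add: coprime_commute)
  have "rden x dvd rnum x * G" using eq by simp
  then have "rden x dvd G" using coprime_dvd_mult_right_iff[OF cop] by simp
  then obtain w where w: "G = rden x * w" by (rule dvdE)
  show "\<forall>u. poly (rden x) u \<noteq> 0" using FG(2) w by (metis mult_zero_left poly_mult)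
  show "degree (rnum x) \<le> degree (rden x)"
  proof (cases "rnum x = 0")
    case True then show ?thesis by simp
  next
    case False
    then have "F \<noteq> 0" using eq FG b0 by auto
    have "degree (rnum x) + degree G = degree F + degree (rden x)"
      using eq False FG(1) b0 \<open>F \<noteq> 0\<close> by (metis degree_mult_eq)
    then show ?thesis using FG(3) by linarith
  qed
qed

lemma Fract_div: "b \<noteq> 0 \<Longrightarrow> Fract a b = Fract a 1 / Fract b 1"
  by simp



lemma core:
  fixes p q :: "real poly fract" and s :: real
  assumes p: "p \<in> dressD" and q: "q \<in> dressD" and p0: "p \<noteq> 0" and deg: "rdeg q \<le> rdeg p"
    and s: "s = 1 \<or> s = -1" and sg: "\<forall>u\<in>rroots p. s * reval q u > 0"
  shows "\<exists>e. e \<noteq> 0 \<and> e \<in> dressD \<and> 1/e \<in> dressD \<and> q * (1 - q*e) / p \<in> dressD"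
proof -
  define f where "f = rnum p"
  define g where "g = rden p"
  define h where "h = rnum q"
  define k where "k = rden q"
  have g0: "g \<noteq> 0" "\<forall>u. poly g u \<noteq> 0" "p = Fract f g"
    using D_red[OF p] unfolding f_def g_def by auto
  have k0: "k \<noteq> 0" "\<forall>u. poly k u \<noteq> 0" "degree h \<le> degree k" "q = Fract h k"
    using D_red[OF q] unfolding h_def k_def by auto
  have f0: "f \<noteq> 0" using p0 by (simp add: f_def rnum_def)
  have degi: "int (degree h) - int (degree k) \<le> int (degree f) - int (degree g)"
    using deg unfolding rdeg_def f_def g_def h_def k_def .
  have ss: "s * s = 1" using s by auto
  have s0: "s \<noteq> 0" using s by auto
  have sgu: "s * (poly h u / poly k u) > 0" if "poly f u = 0" for u
    using sg that unfolding rroots_def reval_def f_def h_def k_def by auto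
  have hne: "\<forall>u. poly f u = 0 \<longrightarrow> poly h u \<noteq> 0"
  proof (intro allI impI notI)
    fix u assume "poly f u = 0" "poly h u = 0"
    then show False using sgu[of u] by simp
  qed
  obtain fr fc where sp: "f = fr * fc" "fr \<noteq> 0" "\<forall>x. poly fc x \<noteq> 0" "\<forall>x. poly fr x = 0 \<longrightarrow> poly f x = 0"
     "\<forall>h k. (\<forall>u. poly f u = 0 \<longrightarrow> poly h u \<noteq> 0) \<longrightarrow> (\<exists>L. fr dvd k - h * L)"
    using split_lemma[OF f0] by blast
  obtain L where L: "fr dvd k - h * L" using sp(5) hne by blast
  then obtain Z0 where Z0: "k - h * L = fr * Z0" by (rule dvdE)
  define L' where "L' = smult s L"
  have Lpos: "\<forall>u. poly fr u = 0 \<longrightarrow> poly L' u > 0"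
  proof (intro allI impI)
    fix u assume u: "poly fr u = 0"
    then have fu: "poly f u = 0" using sp(4) by blast
    have hu: "poly h u \<noteq> 0" using hne fu by blast
    have ku: "poly k u \<noteq> 0" using k0(2) by blast
    have "poly (k - h * L) u = 0" using Z0 u by simp
    then have hl: "poly L u = poly k u / poly h u" using hu by (simp add: field_simps)
    have eq: "poly L' u = (s * (poly h u / poly k u)) * (poly k u / poly h u)^2"
      unfolding L'_def using hu ku hl by (simp add: field_simps power2_eq_square)
    have sq: "(poly k u / poly h u)^2 > 0" using hu ku by simp
    have X: "(s * (poly h u / poly k u)) * (poly k u / poly h u)^2 > 0"
      by (rule mult_pos_pos[OF sgu[OF fu] sq])
    show "poly L' u > 0" using eq X by linarith
  qed
  define m where "m = degree L' + 1"
  obtain c where c: "c > 0" "\<forall>x. poly L' x + c * (poly fr x)^2 * (1 + x^2)^m > 0"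
    using pos_lemma[OF sp(2) Lpos, of m] unfolding m_def by auto
  define W where "W = [:1,0,1::real:]^m"
  define \<Phi> where "\<Phi> = fr * fr * W"
  define N where "N = L' + smult c \<Phi>"
  define B where "B = 1 + \<Phi>"
  define A where "A = smult s N"
  have pW: "poly W x = (1 + x^2)^m" for x unfolding W_def by (simp add: power2_eq_square)
  have pPhi: "poly \<Phi> x = (poly fr x)^2 * (1 + x^2)^m" for x
    unfolding \<Phi>_def by (simp add: pW power2_eq_square)
  have Phi0: "poly \<Phi> x \<ge> 0" for x unfolding pPhi by (simp add: add_nonneg_nonneg)
  have Npos: "poly N x > 0" for x using c(2) unfolding N_def by (simp add: pPhi mult.assoc)
  have Bpos: "poly B x > 0" for x unfolding B_def using Phi0[of x] by simp
  have N0: "N \<noteq> 0" using Npos[of 0] by auto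
  have B0: "B \<noteq> 0" using Bpos[of 0] by auto
  have A0: "A \<noteq> 0" using N0 s0 by (simp add: A_def)
  have Nnr: "\<forall>x. poly N x \<noteq> 0" using Npos by (metis less_irrefl)
  have Anr: "\<forall>x. poly A x \<noteq> 0" using Nnr s0 by (simp add: A_def)
  have Bnr: "\<forall>x. poly B x \<noteq> 0" using Bpos by (metis less_irrefl)
  have dW: "degree W = 2 * m" unfolding W_def by (simp add: degree_power_eq)
  have W0: "W \<noteq> 0" unfolding W_def by simp
  have dPhi: "degree \<Phi> = 2 * degree fr + 2 * m" unfolding \<Phi>_def using sp(2) W0
    by (simp add: degree_mult_eq dW)
  have dL: "degree L' < degree \<Phi>" using dPhi unfolding m_def by simp
  have dN: "degree N = degree \<Phi>" unfolding N_def using dL c(1)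
    by (simp add: degree_add_eq_right)
  have dB: "degree B = degree \<Phi>" unfolding B_def using dPhi unfolding m_def
    by (simp add: degree_add_eq_right)
  have dA: "degree A = degree B" using dN dB s0 by (simp add: A_def)
  define e where "e = Fract A B"
  have e0: "e \<noteq> 0" unfolding e_def using A0 B0 by (simp add: Zero_fract_def eq_fract)
  have eD: "e \<in> dressD" unfolding e_def using B0 Bnr dA by (intro D_Fract) auto
  have ieD: "1/e \<in> dressD"
  proof -
    have "1/e = Fract B A" unfolding e_def using A0 B0 by (simp add: One_fract_def)
    then show ?thesis using A0 Anr dA by (simp add: D_Fract)
  qed
  define Z where "Z = Z0 + fr * W * (k - smult (s*c) h)"
  have AL: "A = L + smult (s*c) \<Phi>" unfolding A_def N_def L'_def using ss by (simp add: smult_add_right)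
  have kBhA: "k * B - h * A = fr * Z"
  proof -
    have "k * B - h * A = (k - h * L) + \<Phi> * (k - smult (s*c) h)"
      unfolding B_def AL by (simp add: algebra_simps)
    also have "\<dots> = fr * Z" unfolding Z0 Z_def \<Phi>_def by (simp add: algebra_simps)
    finally show ?thesis .
  qed
  define \<phi> :: "real poly \<Rightarrow> real poly fract" where "\<phi> = (\<lambda>a. Fract a 1)"
  have phm: "\<phi> (a * b) = \<phi> a * \<phi> b" for a b by (simp add: \<phi>_def)
  have phd: "\<phi> (a - b) = \<phi> a - \<phi> b" for a b by (simp add: \<phi>_def)
  have ph0: "\<phi> a \<noteq> 0" if "a \<noteq> 0" for a using that by (simp add: \<phi>_def Zero_fract_def eq_fract)
  have phF: "Fract a b = \<phi> a / \<phi> b" if "b \<noteq> 0" for a b using that by (simp add: \<phi>_def)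
  have rel: "\<phi> k * \<phi> B - \<phi> h * \<phi> A = \<phi> fr * \<phi> Z" using arg_cong[OF kBhA, of \<phi>] by (simp add: phm phd)
  have nz: "\<phi> k \<noteq> 0" "\<phi> B \<noteq> 0" "\<phi> g \<noteq> 0" "\<phi> fr \<noteq> 0" "\<phi> fc \<noteq> 0" "\<phi> f \<noteq> 0"
    using ph0 k0(1) B0 g0(1) sp(2) f0 sp(1) by auto
  have phf: "\<phi> f = \<phi> fr * \<phi> fc" using sp(1) phm by simp
  have expr: "q * (1 - q*e) / p = Fract (h * Z * g) (k * k * B * fc)"
  proof -
    have kkBfc: "k * k * B * fc \<noteq> 0" using k0(1) B0 sp(3) by (metis mult_eq_0_iff poly_0)
    have "q * (1 - q*e) / p = \<phi> h / \<phi> k * (1 - \<phi> h / \<phi> k * (\<phi> A / \<phi> B)) / (\<phi> f / \<phi> g)"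
      unfolding e_def using k0(4) g0(3) phF k0(1) B0 g0(1) by simp
    also have "1 - \<phi> h / \<phi> k * (\<phi> A / \<phi> B) = (\<phi> k * \<phi> B - \<phi> h * \<phi> A) / (\<phi> k * \<phi> B)"
      using nz by (simp add: field_simps)
    also have "\<dots> = \<phi> fr * \<phi> Z / (\<phi> k * \<phi> B)" using rel by simp
    also have "\<phi> h / \<phi> k * (\<phi> fr * \<phi> Z / (\<phi> k * \<phi> B)) / (\<phi> f / \<phi> g)
        = \<phi> h * \<phi> Z * \<phi> g / (\<phi> k * \<phi> k * \<phi> B * \<phi> fc)"
      unfolding phf using nz by (simp add: field_simps)
    also have "\<dots> = Fract (h * Z * g) (k * k * B * fc)"
      using kkBfc by (simp add: phF phm)
    finally show ?thesis .
  qed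
  have den: "k * k * B * fc \<noteq> 0" "\<forall>u. poly (k * k * B * fc) u \<noteq> 0"
    using k0(1,2) B0 Bnr sp(3) by (auto simp: poly_0)
  have degd: "degree (k * k * B * fc) = 2 * degree k + degree B + degree fc"
  proof -
    have "fc \<noteq> 0" using sp(3) by (metis poly_0)
    then show ?thesis using k0(1) B0 by (simp add: degree_mult_eq)
  qed
  have degn: "degree (h * Z * g) \<le> degree (k * k * B * fc)"
  proof (cases "Z = 0")
    case True then show ?thesis by simp
  next
    case False
    have "degree (fr * Z) = degree fr + degree Z" using False sp(2) by (simp add: degree_mult_eq)
    moreover have "degree (k * B - h * A) \<le> degree k + degree B"
    proof -
      have "degree (k * B) \<le> degree k + degree B" by (rule degree_mult_le)
      moreover have "degree (h * A) \<le> degree k + degree B"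
        using degree_mult_le[of h A] k0(3) dA by linarith
      ultimately show ?thesis using degree_diff_le by blast
    qed
    ultimately have dZ: "degree fr + degree Z \<le> degree k + degree B" using kBhA by simp
    have df: "degree f = degree fr + degree fc"
      using sp(1) sp(2) sp(3) by (metis degree_mult_eq poly_0)
    have "degree (h * Z * g) \<le> degree h + degree Z + degree g"
      using degree_mult_le[of "h*Z" g] degree_mult_le[of h Z] by linarith
    then show ?thesis using degd dZ df degi by linarith
  qed
  show ?thesis
    by (rule exI[of _ e]) (use e0 eD ieD expr den degn D_Fract in auto)
qed


theorem theorem3p3:
  fixes p q :: "real poly fract"
  assumes "p \<in> dressD" and "q \<in> dressD" and "p \<noteq> 0" and "q \<noteq> 0"
  and "(rdeg p \<ge> rdeg q \<and> ((\<forall>u\<in>rroots p. reval q u > 0) \<or> (\<forall>u\<in>rroots p. reval q u < 0)))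
     \<or> (rdeg q \<ge> rdeg p \<and> ((\<forall>z\<in>rroots q. reval p z > 0) \<or> (\<forall>z\<in>rroots q. reval p z < 0)))"
  shows "prod_idempotents_D (row_mat p q)"
  using assms(5)
proof
  assume H: "rdeg p \<ge> rdeg q \<and> ((\<forall>u\<in>rroots p. reval q u > 0) \<or> (\<forall>u\<in>rroots p. reval q u < 0))"
  obtain s :: real where s: "s = 1 \<or> s = -1" "\<forall>u\<in>rroots p. s * reval q u > 0"
  proof (cases "\<forall>u\<in>rroots p. reval q u > 0")
    case True then show ?thesis using that[of 1] by auto
  next
    case False then have "\<forall>u\<in>rroots p. reval q u < 0" using H by blast
    then show ?thesis using that[of "-1"] by auto
  qed
  obtain e where e: "e \<noteq> 0" "e \<in> dressD" "1/e \<in> dressD" "q * (1 - q*e) / p \<in> dressD"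
    using core[OF assms(1,2,3) _ s] H by blast
  show ?thesis by (rule case_i_mat[OF assms(3) e(1) assms(1,2) e(2,3,4)])
next
  assume H: "rdeg q \<ge> rdeg p \<and> ((\<forall>z\<in>rroots q. reval p z > 0) \<or> (\<forall>z\<in>rroots q. reval p z < 0))"
  obtain s :: real where s: "s = 1 \<or> s = -1" "\<forall>u\<in>rroots q. s * reval p u > 0"
  proof (cases "\<forall>u\<in>rroots q. reval p u > 0")
    case True then show ?thesis using that[of 1] by auto
  next
    case False then have "\<forall>u\<in>rroots q. reval p u < 0" using H by blast
    then show ?thesis using that[of "-1"] by auto
  qed
  obtain e where e: "e \<noteq> 0" "e \<in> dressD" "1/e \<in> dressD" "p * (1 - p*e) / q \<in> dressD"
    using core[OF assms(2,1,4) _ s] H by blast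
  show ?thesis by (rule case_ii_mat[OF assms(4) e(1) assms(1,2) e(2,3,4)])
qed

end
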